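(* Let $\theta_0>0$ and let $F_N=\sum_{j=1}^N w_j\delta_{z_j}$ and $F'_{N'}=\sum_{j=1}^{N'}w'_j\delta_{z'_j}$ be probability measures on $(0,\infty)$. Then for every $K\le\min(N,N')$, \[ \|p_{\theta_0,F_N}-p_{\theta_0,F'_{N'}}\|_1\le 4\max_{1\le j\le K}\frac{|z_j-z'_j|}{z_j}+\sum_{j=1}^K|w_j-w'_j|+\sum_{j=K+1}^N w_j+\sum_{j=K+1}^{N'}w'_j. \]
   Context: For $\theta>0$ and a probability measure $F$ on $(0,\infty)$, $p_{\theta,F}(x,y)=\int z^2\theta e^{-z(x+\theta y)}\,dF(z)$ for $(x,y)\in(0,\infty)^2$. $\|\cdot\|_1$ is the $L^1$ norm with respect to Lebesgue measure on $(0,\infty)^2$. *)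

theory Defs
  imports "HOL-Analysis.Analysis"
begin

definition pdens :: "real \<Rightarrow> real measure \<Rightarrow> real \<times> real \<Rightarrow> real" where
  "pdens \<theta> F = (\<lambda>(x, y). \<integral> z. z\<^sup>2 * \<theta> * exp (- z * (x + \<theta> * y)) \<partial>F)"

definition fin_mix :: "nat \<Rightarrow> (nat \<Rightarrow> real) \<Rightarrow> (nat \<Rightarrow> real) \<Rightarrow> real measure" where
  "fin_mix N w z = density (count_space UNIV)
      (\<lambda>t. ennreal (\<Sum>j\<in>{1..N}. if z j = t then w j else 0))"

definition L1dist :: "(real \<times> real \<Rightarrow> real) \<Rightarrow> (real \<times> real \<Rightarrow> real) \<Rightarrow> ennreal" where
  "L1dist f g = (\<integral>\<^sup>+ q \<in> {0<..} \<times> {0<..}. ennreal \<bar>f q - g q\<bar> \<partial>lborel)"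

end

theory Submission imports Defs begin

lemma nn_Ioi:
  fixes f :: "real \<Rightarrow> real"
  assumes "(f has_integral I) {0..}" "\<And>x. x \<ge> 0 \<Longrightarrow> f x \<ge> 0"
  shows "(\<integral>\<^sup>+x\<in>{0<..}. ennreal (f x) \<partial>lborel) = ennreal I"
proof -
  have "(\<integral>\<^sup>+x. ennreal (indicator {0..} x * f x) \<partial>lborel) = ennreal I"
    by (rule nn_integral_has_integral_lebesgue) (use assms in auto)
  moreover have "(\<integral>\<^sup>+x\<in>{0<..}. ennreal (f x) \<partial>lborel) = (\<integral>\<^sup>+x. ennreal (indicator {0..} x * f x) \<partial>lborel)"
    apply (rule nn_integral_cong_AE)
    using AE_lborel_singleton[of 0] by eventually_elim (auto simp: indicator_def)
  ultimately show ?thesis by simp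
qed

lemma hi_exp: "c > 0 \<Longrightarrow> ((\<lambda>x::real. exp (-c*x)) has_integral 1/c) {0..}"
  using has_integral_exp_minus_to_infinity[of c 0] by simp

lemma exp_int: "c > 0 \<Longrightarrow> (\<integral>\<^sup>+x\<in>{0<..}. ennreal (c * exp (-c*x)) \<partial>lborel) = 1"
  apply (rule nn_Ioi[where I=1, simplified])
  using has_integral_mult_right[OF hi_exp, of c c] by auto

lemma L1D:
  fixes a b :: real assumes a: "a > 0" and b: "b > 0"
  shows "(\<integral>\<^sup>+x\<in>{0<..}. ennreal \<bar>a * exp (-a*x) - b * exp (-b*x)\<bar> \<partial>lborel) \<le> ennreal (2*\<bar>a-b\<bar>/a)"
proof -
  define h where "h x = \<bar>a-b\<bar> * exp (-a*x) + b * \<bar>exp (-a*x) - exp (-b*x)\<bar>" for x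
  have hint: "(h has_integral 2*\<bar>a-b\<bar>/a) {0..}"
  proof (cases "a \<le> b")
    case True
    have "((\<lambda>x. (b-a) * exp (-a*x) + b * (exp (-a*x) - exp (-b*x))) has_integral (b-a)*(1/a) + b*(1/a - 1/b)) {0..}"
      by (intro has_integral_add has_integral_mult_right has_integral_diff hi_exp) (use a b in auto)
    moreover have "(b-a)*(1/a) + b*(1/a - 1/b) = 2*\<bar>a-b\<bar>/a" using True a b by (simp add: field_simps)
    moreover have "h x = (b-a) * exp (-a*x) + b * (exp (-a*x) - exp (-b*x))" if "x \<in> {0..}" for x
      using True that a b unfolding h_def by (auto simp: mult_right_mono)
    ultimately show ?thesis by (metis (no_types, lifting) has_integral_cong)
  next
    case False
    have "((\<lambda>x. (a-b) * exp (-a*x) + b * (exp (-b*x) - exp (-a*x))) has_integral (a-b)*(1/a) + b*(1/b - 1/a)) {0..}"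
      by (intro has_integral_add has_integral_mult_right has_integral_diff hi_exp) (use a b in auto)
    moreover have "(a-b)*(1/a) + b*(1/b - 1/a) = 2*\<bar>a-b\<bar>/a" using False a b by (simp add: field_simps)
    moreover have "h x = (a-b) * exp (-a*x) + b * (exp (-b*x) - exp (-a*x))" if "x \<in> {0..}" for x
      using False that a b unfolding h_def by (auto simp: mult_right_mono)
    ultimately show ?thesis by (metis (no_types, lifting) has_integral_cong)
  qed
  have "(\<integral>\<^sup>+x\<in>{0<..}. ennreal \<bar>a * exp (-a*x) - b * exp (-b*x)\<bar> \<partial>lborel) \<le> (\<integral>\<^sup>+x\<in>{0<..}. ennreal (h x) \<partial>lborel)"
  proof (rule nn_integral_mono)
    fix x
    have "\<bar>a * exp (-a*x) - b * exp (-b*x)\<bar> = \<bar>(a-b) * exp (-a*x) + b * (exp (-a*x) - exp (-b*x))\<bar>"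
      by (simp add: algebra_simps)
    also have "\<dots> \<le> h x" unfolding h_def using b
      by (metis abs_mult abs_of_pos abs_triangle_ineq exp_gt_zero)
    finally show "ennreal \<bar>a * exp (-a*x) - b * exp (-b*x)\<bar> * indicator {0<..} x \<le> ennreal (h x) * indicator {0<..} x"
      by (auto simp: indicator_def)
  qed
  also have "\<dots> = ennreal (2*\<bar>a-b\<bar>/a)"
    by (rule nn_Ioi[OF hint]) (use b in \<open>auto simp: h_def\<close>)
  finally show ?thesis .
qed


lemma prod_int:
  fixes f g :: "real \<Rightarrow> real"
  assumes [measurable]: "f \<in> borel_measurable borel" "g \<in> borel_measurable borel"
    and "\<And>x. f x \<ge> 0" "\<And>x. g x \<ge> 0"
  shows "(\<integral>\<^sup>+q\<in>{0<..}\<times>{0<..}. ennreal (f (fst q) * g (snd q)) \<partial>lborel)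
       = (\<integral>\<^sup>+x\<in>{0<..}. ennreal (f x) \<partial>lborel) * (\<integral>\<^sup>+y\<in>{0<..}. ennreal (g y) \<partial>lborel)"
proof -
  have "(\<integral>\<^sup>+q\<in>{0<..}\<times>{0<..}. ennreal (f (fst q) * g (snd q)) \<partial>lborel)
      = (\<integral>\<^sup>+q. ennreal (f (fst q) * g (snd q)) * indicator ({0<..}\<times>{0<..}) q \<partial>(lborel \<Otimes>\<^sub>M lborel))"
    by (simp add: lborel_prod)
  also have "\<dots> = (\<integral>\<^sup>+x. \<integral>\<^sup>+y. ennreal (f x * g y) * indicator ({0<..}\<times>{0<..}) (x,y) \<partial>lborel \<partial>lborel)"
    by (rule lborel.nn_integral_fst[symmetric, where f="\<lambda>q. ennreal (f (fst q) * g (snd q)) * indicator ({0<..}\<times>{0<..}) q", simplified]) measurable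
  also have "\<dots> = (\<integral>\<^sup>+x. (ennreal (f x) * indicator {0<..} x) * (\<integral>\<^sup>+y. ennreal (g y) * indicator {0<..} y \<partial>lborel) \<partial>lborel)"
  proof (rule nn_integral_cong)
    fix x
    have "(\<integral>\<^sup>+y. ennreal (f x * g y) * indicator ({0<..}\<times>{0<..}) (x,y) \<partial>lborel)
        = (\<integral>\<^sup>+y. (ennreal (f x) * indicator {0<..} x) * (ennreal (g y) * indicator {0<..} y) \<partial>lborel)"
      by (rule nn_integral_cong) (auto simp: indicator_def ennreal_mult assms)
    also have "\<dots> = (ennreal (f x) * indicator {0<..} x) * (\<integral>\<^sup>+y. ennreal (g y) * indicator {0<..} y \<partial>lborel)"
      by (rule nn_integral_cmult) measurable
    finally show "(\<integral>\<^sup>+y. ennreal (f x * g y) * indicator ({0<..}\<times>{0<..}) (x,y) \<partial>lborel) = (ennreal (f x) * indicator {0<..} x) * (\<integral>\<^sup>+y. ennreal (g y) * indicator {0<..} y \<partial>lborel)" .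
  qed
  also have "\<dots> = (\<integral>\<^sup>+x\<in>{0<..}. ennreal (f x) \<partial>lborel) * (\<integral>\<^sup>+y\<in>{0<..}. ennreal (g y) \<partial>lborel)"
    by (rule nn_integral_multc) measurable
  finally show ?thesis .
qed


definition gd :: "real \<Rightarrow> real \<Rightarrow> real \<times> real \<Rightarrow> real" where
  "gd \<theta> a q = a\<^sup>2 * \<theta> * exp (- a * (fst q + \<theta> * snd q))"

lemma int_single:
  "integral\<^sup>L (count_space UNIV) (\<lambda>t. indicator {a} t * (c::real)) = c"
  by (simp add: measure_count_space)

lemma pdens_fin:
  assumes "\<forall>j\<in>{1..N}. w j \<ge> 0"
  shows "pdens \<theta> (fin_mix N w z) q = (\<Sum>j\<in>{1..N}. w j * gd \<theta> (z j) q)"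
proof -
  obtain x y where q: "q = (x,y)" by (cases q)
  define h where "h t = t\<^sup>2 * \<theta> * exp (- t * (x + \<theta> * y))" for t
  define d where "d t = (\<Sum>j\<in>{1..N}. if z j = t then w j else 0)" for t
  have "pdens \<theta> (fin_mix N w z) q = integral\<^sup>L (density (count_space UNIV) (\<lambda>t. ennreal (d t))) h"
    unfolding pdens_def fin_mix_def q h_def d_def by simp
  also have "\<dots> = integral\<^sup>L (count_space UNIV) (\<lambda>t. d t *\<^sub>R h t)"
    by (rule integral_density) (auto simp: d_def assms intro!: sum_nonneg)
  also have "\<dots> = integral\<^sup>L (count_space UNIV) (\<lambda>t. \<Sum>j\<in>{1..N}. indicator {z j} t * (w j * h (z j)))"
    unfolding d_def real_scaleR_def sum_distrib_right
    by (intro Bochner_Integration.integral_cong refl sum.cong) (auto simp: indicator_def)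
  also have "\<dots> = (\<Sum>j\<in>{1..N}. integral\<^sup>L (count_space UNIV) (\<lambda>t. indicator {z j} t * (w j * h (z j))))"
    by (rule Bochner_Integration.integral_sum) (auto intro!: integrable_real_mult_indicator)
  also have "\<dots> = (\<Sum>j\<in>{1..N}. w j * gd \<theta> (z j) q)"
    by (simp add: int_single h_def gd_def q)
  finally show ?thesis .
qed


definition QI :: "(real \<times> real \<Rightarrow> real) \<Rightarrow> ennreal" where
  "QI h = (\<integral>\<^sup>+q\<in>{0<..}\<times>{0<..}. ennreal (h q) \<partial>lborel)"

lemma gd_meas[measurable]: "gd \<theta> a \<in> borel_measurable borel"
  unfolding gd_def[abs_def] by (intro borel_measurable_continuous_onI continuous_intros)

lemma Q_sets[measurable]: "({0<..}\<times>{0<..} :: (real\<times>real) set) \<in> sets borel"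
  by (intro borel_open open_Times open_greaterThan)

lemma meas_ind[measurable]: "h \<in> borel_measurable borel \<Longrightarrow>
   (\<lambda>q. ennreal (h q) * indicator ({0<..}\<times>{0<..} :: (real\<times>real) set) q) \<in> borel_measurable lborel"
  by simp

lemma gd_nonneg: "\<theta> > 0 \<Longrightarrow> gd \<theta> a q \<ge> 0"
  unfolding gd_def by simp

lemma gd_prod: "gd \<theta> a q = (a * exp (-a * fst q)) * ((\<theta>*a) * exp (-(\<theta>*a) * snd q))"
  unfolding gd_def by (simp add: power2_eq_square mult_exp_exp algebra_simps)

lemma QI_prod:
  fixes f g :: "real \<Rightarrow> real"
  assumes "f \<in> borel_measurable borel" "g \<in> borel_measurable borel"
    and "\<And>x. f x \<ge> 0" "\<And>x. g x \<ge> 0"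
  shows "QI (\<lambda>q. f (fst q) * g (snd q))
       = (\<integral>\<^sup>+x\<in>{0<..}. ennreal (f x) \<partial>lborel) * (\<integral>\<^sup>+y\<in>{0<..}. ennreal (g y) \<partial>lborel)"
  unfolding QI_def by (rule prod_int[OF assms])

lemma QI_mono:
  assumes "\<And>q. h1 q \<le> h2 q" shows "QI h1 \<le> QI h2"
  unfolding QI_def by (rule nn_integral_mono) (auto simp: assms indicator_def intro: ennreal_leI)

lemma QI_add_le:
  assumes [measurable]: "h1 \<in> borel_measurable borel" "h2 \<in> borel_measurable borel"
    and "\<And>q. h1 q \<ge> 0" "\<And>q. h2 q \<ge> 0"
    and "QI h1 \<le> ennreal r1" "QI h2 \<le> ennreal r2" "r1 \<ge> 0" "r2 \<ge> 0"
  shows "QI (\<lambda>q. h1 q + h2 q) \<le> ennreal (r1 + r2)"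
proof -
  have "QI (\<lambda>q. h1 q + h2 q) = (\<integral>\<^sup>+q. ennreal (h1 q) * indicator ({0<..}\<times>{0<..}) q + ennreal (h2 q) * indicator ({0<..}\<times>{0<..}) q \<partial>lborel)"
    unfolding QI_def by (rule nn_integral_cong) (auto simp: indicator_def assms ennreal_plus)
  also have "\<dots> = QI h1 + QI h2"
    unfolding QI_def by (rule nn_integral_add) (auto intro: meas_ind)
  also have "\<dots> \<le> ennreal r1 + ennreal r2" by (intro add_mono assms)
  finally show ?thesis using assms by (simp add: ennreal_plus)
qed

lemma QI_cmult_le:
  assumes [measurable]: "h \<in> borel_measurable borel" and "\<And>q. h q \<ge> 0" "c \<ge> 0"
    and "QI h \<le> ennreal r"
  shows "QI (\<lambda>q. c * h q) \<le> ennreal (c * r)"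
proof -
  have "QI (\<lambda>q. c * h q) = (\<integral>\<^sup>+q. ennreal c * (ennreal (h q) * indicator ({0<..}\<times>{0<..}) q) \<partial>lborel)"
    unfolding QI_def by (rule nn_integral_cong) (auto simp: indicator_def assms ennreal_mult)
  also have "\<dots> = ennreal c * QI h"
    unfolding QI_def by (rule nn_integral_cmult) (auto intro: meas_ind)
  also have "\<dots> \<le> ennreal c * ennreal r" by (intro mult_left_mono assms) simp
  finally show ?thesis using assms by (simp add: ennreal_mult')
qed

lemma QI_sum_le:
  assumes "finite S"
    and "\<And>i. i \<in> S \<Longrightarrow> h i \<in> borel_measurable borel"
    and "\<And>i q. i \<in> S \<Longrightarrow> h i q \<ge> 0"
    and "\<And>i. i \<in> S \<Longrightarrow> QI (h i) \<le> ennreal (r i)" "\<And>i. i \<in> S \<Longrightarrow> r i \<ge> 0"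
  shows "QI (\<lambda>q. \<Sum>i\<in>S. h i q) \<le> ennreal (\<Sum>i\<in>S. r i)"
  using assms
proof (induction S rule: finite_induct)
  case empty
  then show ?case by (simp add: QI_def)
next
  case (insert x F)
  have "QI (\<lambda>q. h x q + (\<Sum>i\<in>F. h i q)) \<le> ennreal (r x + (\<Sum>i\<in>F. r i))"
    apply (rule QI_add_le)
    using insert by (auto intro!: borel_measurable_sum sum_nonneg)
  then show ?case using insert by simp
qed

lemma G_int: assumes "\<theta> > 0" "a > 0" shows "QI (gd \<theta> a) = 1"
proof -
  have "QI (gd \<theta> a) = QI (\<lambda>q. (a * exp (-a * fst q)) * ((\<theta>*a) * exp (-(\<theta>*a) * snd q)))"
    by (simp add: gd_prod[abs_def])
  also have "\<dots> = 1"
  proof -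
    have e1: "(\<integral>\<^sup>+x\<in>{0<..}. ennreal (a * exp (-a*x)) \<partial>lborel) = 1"
      using exp_int[of a] assms by simp
    have e2: "(\<integral>\<^sup>+x\<in>{0<..}. ennreal ((\<theta>*a) * exp (-(\<theta>*a)*x)) \<partial>lborel) = 1"
      using exp_int[of "\<theta>*a"] assms by simp
    show ?thesis
      apply (subst QI_prod)
      using assms apply (auto intro!: borel_measurable_continuous_onI continuous_intros)[4]
      using e1 e2 by simp
  qed
  finally show ?thesis .
qed

lemma G_diff: assumes "\<theta> > 0" "a > 0" "b > 0"
  shows "QI (\<lambda>q. \<bar>gd \<theta> a q - gd \<theta> b q\<bar>) \<le> ennreal (4 * \<bar>a - b\<bar> / a)"
proof -
  define f1 where "f1 x = \<bar>a * exp (-a*x) - b * exp (-b*x)\<bar>" for x :: real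
  define g1 where "g1 y = (\<theta>*a) * exp (-(\<theta>*a)*y)" for y :: real
  define f2 where "f2 x = b * exp (-b*x)" for x :: real
  define g2 where "g2 y = \<bar>(\<theta>*a) * exp (-(\<theta>*a)*y) - (\<theta>*b) * exp (-(\<theta>*b)*y)\<bar>" for y :: real
  have [measurable]: "f1 \<in> borel_measurable borel" "g1 \<in> borel_measurable borel"
     "f2 \<in> borel_measurable borel" "g2 \<in> borel_measurable borel"
    unfolding f1_def[abs_def] g1_def[abs_def] f2_def[abs_def] g2_def[abs_def]
    by (intro borel_measurable_continuous_onI continuous_intros)+
  have nn: "f1 x \<ge> 0" "g1 x \<ge> 0" "f2 x \<ge> 0" "g2 x \<ge> 0" for x
    unfolding f1_def g1_def f2_def g2_def using assms by auto
  have pw: "\<bar>gd \<theta> a q - gd \<theta> b q\<bar> \<le> f1 (fst q) * g1 (snd q) + f2 (fst q) * g2 (snd q)" for q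
  proof -
    define A where "A = a * exp (-a * fst q)"
    define B where "B = (\<theta>*a) * exp (-(\<theta>*a) * snd q)"
    define C where "C = b * exp (-b * fst q)"
    define D where "D = (\<theta>*b) * exp (-(\<theta>*b) * snd q)"
    have "gd \<theta> a q - gd \<theta> b q = (A - C) * B + C * (B - D)"
      unfolding A_def B_def C_def D_def gd_prod by (simp add: algebra_simps)
    moreover have "B \<ge> 0" "C \<ge> 0" using assms by (auto simp: B_def C_def)
    ultimately have "\<bar>gd \<theta> a q - gd \<theta> b q\<bar> \<le> \<bar>A - C\<bar> * B + C * \<bar>B - D\<bar>"
      by (metis abs_mult abs_of_nonneg abs_triangle_ineq)
    thus ?thesis unfolding A_def B_def C_def D_def f1_def g1_def f2_def g2_def by simp
  qed
  have "QI (\<lambda>q. \<bar>gd \<theta> a q - gd \<theta> b q\<bar>) \<le> QI (\<lambda>q. f1 (fst q) * g1 (snd q) + f2 (fst q) * g2 (snd q))"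
    by (rule QI_mono[OF pw])
  also have "\<dots> \<le> ennreal (2 * \<bar>a - b\<bar> / a + 2 * \<bar>\<theta>*a - \<theta>*b\<bar> / (\<theta>*a))"
  proof (rule QI_add_le)
    show "QI (\<lambda>q. f1 (fst q) * g1 (snd q)) \<le> ennreal (2 * \<bar>a - b\<bar> / a)"
    proof -
      have e2: "(\<integral>\<^sup>+x\<in>{0<..}. ennreal (g1 x) \<partial>lborel) = 1"
        using exp_int[of "\<theta>*a"] assms by (simp add: g1_def)
      show ?thesis
        apply (subst QI_prod)
        using nn apply auto[4]
        using e2 L1D[of a b] assms by (simp add: f1_def)
    qed
    show "QI (\<lambda>q. f2 (fst q) * g2 (snd q)) \<le> ennreal (2 * \<bar>\<theta>*a - \<theta>*b\<bar> / (\<theta>*a))"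
    proof -
      have e2: "(\<integral>\<^sup>+x\<in>{0<..}. ennreal (f2 x) \<partial>lborel) = 1"
        using exp_int[of "b"] assms by (simp add: f2_def)
      show ?thesis
        apply (subst QI_prod)
        using nn apply auto[4]
        using e2 L1D[of "\<theta>*a" "\<theta>*b"] assms by (simp add: g2_def)
    qed
  qed (use nn assms in \<open>auto simp: f1_def g1_def f2_def g2_def intro!: borel_measurable_continuous_onI continuous_intros\<close>)
  also have "2 * \<bar>\<theta>*a - \<theta>*b\<bar> / (\<theta>*a) = 2 * \<bar>a - b\<bar> / a"
    using assms by (simp add: abs_mult flip: right_diff_distrib)
  finally show ?thesis by simp
qed


lemma sum_split: "(K::nat) \<le> N \<Longrightarrow> (\<Sum>j\<in>{1..N}. f j) = (\<Sum>j\<in>{1..K}. f j) + (\<Sum>j\<in>{K+1..N}. (f j :: real))"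
proof -
  assume "K \<le> N"
  hence "{1..N} = {1..K} \<union> {K+1..N}" by auto
  thus ?thesis by (simp add: sum.union_disjoint ivl_disj_int)
qed

theorem mainTheorem6:
  fixes \<theta>0 :: real and N N' K :: nat and w z w' z' :: "nat \<Rightarrow> real"
  assumes "\<theta>0 > 0"
    and "\<forall>j\<in>{1..N}. w j \<ge> 0 \<and> z j > 0" and "(\<Sum>j\<in>{1..N}. w j) = 1"
    and "\<forall>j\<in>{1..N'}. w' j \<ge> 0 \<and> z' j > 0" and "(\<Sum>j\<in>{1..N'}. w' j) = 1"
    and "K \<le> min N N'"
  shows "L1dist (pdens \<theta>0 (fin_mix N w z)) (pdens \<theta>0 (fin_mix N' w' z'))
    \<le> ennreal (4 * Max ({0} \<union> {\<bar>z j - z' j\<bar> / z j | j. j \<in> {1..K}})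
        + (\<Sum>j\<in>{1..K}. \<bar>w j - w' j\<bar>)
        + (\<Sum>j\<in>{K+1..N}. w j) + (\<Sum>j\<in>{K+1..N'}. w' j))"
proof -
  note th = assms(1)
  have KN: "K \<le> N" "K \<le> N'" using assms(6) by auto
  have wN: "j \<in> {1..N} \<Longrightarrow> w j \<ge> 0 \<and> z j > 0" for j using assms(2) by auto
  have wN': "j \<in> {1..N'} \<Longrightarrow> w' j \<ge> 0 \<and> z' j > 0" for j using assms(4) by auto
  have wK: "j \<in> {1..K} \<Longrightarrow> w j \<ge> 0 \<and> z j > 0 \<and> w' j \<ge> 0 \<and> z' j > 0" for j
    using wN wN' KN by auto
  define G where "G j = gd \<theta>0 (z j)" for j
  define G' where "G' j = gd \<theta>0 (z' j)" for j
  define r where "r j = \<bar>z j - z' j\<bar> / z j" for j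
  define M where "M = Max ({0} \<union> {\<bar>z j - z' j\<bar> / z j | j. j \<in> {1..K}})"
  have finS: "finite ({0} \<union> {\<bar>z j - z' j\<bar> / z j | j. j \<in> {1..K}})"
    by (simp add: Setcompr_eq_image)
  have M0: "M \<ge> 0" unfolding M_def using finS by (intro Max_ge) auto
  have rM: "j \<in> {1..K} \<Longrightarrow> r j \<le> M" for j unfolding M_def r_def using finS by (intro Max_ge) auto
  have Gnn: "G j q \<ge> 0" "G' j q \<ge> 0" for j q unfolding G_def G'_def using th by (auto intro: gd_nonneg)
  have Gm[measurable]: "G j \<in> borel_measurable borel" "G' j \<in> borel_measurable borel" for j
    unfolding G_def G'_def by auto
  have P: "pdens \<theta>0 (fin_mix N w z) = (\<lambda>q. \<Sum>j\<in>{1..N}. w j * G j q)"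
    using pdens_fin[of N w] wN unfolding G_def by auto
  have P': "pdens \<theta>0 (fin_mix N' w' z') = (\<lambda>q. \<Sum>j\<in>{1..N'}. w' j * G' j q)"
    using pdens_fin[of N' w'] wN' unfolding G'_def by auto
  define B where "B q = (\<Sum>j\<in>{1..K}. w j * \<bar>G j q - G' j q\<bar> + \<bar>w j - w' j\<bar> * G' j q)
      + (\<Sum>j\<in>{K+1..N}. w j * G j q) + (\<Sum>j\<in>{K+1..N'}. w' j * G' j q)" for q
  have pw: "\<bar>(\<Sum>j\<in>{1..N}. w j * G j q) - (\<Sum>j\<in>{1..N'}. w' j * G' j q)\<bar> \<le> B q" for q
  proof -
    define A where "A = (\<Sum>j\<in>{K+1..N}. w j * G j q)"
    define A' where "A' = (\<Sum>j\<in>{K+1..N'}. w' j * G' j q)"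
    have A0: "A \<ge> 0" "A' \<ge> 0" unfolding A_def A'_def using wN wN' KN
      by (auto intro!: sum_nonneg mult_nonneg_nonneg simp: Gnn)
    have "(\<Sum>j\<in>{1..N}. w j * G j q) - (\<Sum>j\<in>{1..N'}. w' j * G' j q)
        = (\<Sum>j\<in>{1..K}. w j * G j q - w' j * G' j q) + A - A'"
      unfolding A_def A'_def using sum_split[OF KN(1)] sum_split[OF KN(2)] by (simp add: sum_subtractf)
    hence "\<bar>(\<Sum>j\<in>{1..N}. w j * G j q) - (\<Sum>j\<in>{1..N'}. w' j * G' j q)\<bar>
        \<le> (\<Sum>j\<in>{1..K}. \<bar>w j * G j q - w' j * G' j q\<bar>) + A + A'"
      using A0 sum_abs[of "\<lambda>j. w j * G j q - w' j * G' j q" "{1..K}"] by linarith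
    also have "(\<Sum>j\<in>{1..K}. \<bar>w j * G j q - w' j * G' j q\<bar>)
        \<le> (\<Sum>j\<in>{1..K}. w j * \<bar>G j q - G' j q\<bar> + \<bar>w j - w' j\<bar> * G' j q)"
    proof (rule sum_mono)
      fix j assume j: "j \<in> {1..K}"
      have "w j * G j q - w' j * G' j q = w j * (G j q - G' j q) + (w j - w' j) * G' j q"
        by (simp add: algebra_simps)
      thus "\<bar>w j * G j q - w' j * G' j q\<bar> \<le> w j * \<bar>G j q - G' j q\<bar> + \<bar>w j - w' j\<bar> * G' j q"
        using wK[OF j] Gnn[of j q]
        by (metis abs_mult abs_of_nonneg abs_triangle_ineq)
    qed
    finally show ?thesis unfolding B_def A_def A'_def by linarith
  qed
  have "L1dist (pdens \<theta>0 (fin_mix N w z)) (pdens \<theta>0 (fin_mix N' w' z')) = QI (\<lambda>q. \<bar>(\<Sum>j\<in>{1..N}. w j * G j q) - (\<Sum>j\<in>{1..N'}. w' j * G' j q)\<bar>)"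
    unfolding L1dist_def QI_def P P' by simp
  also have "\<dots> \<le> QI B" by (rule QI_mono[OF pw])
  also have "\<dots> \<le> ennreal ((\<Sum>j\<in>{1..K}. w j * (4 * r j) + \<bar>w j - w' j\<bar> * 1)
      + (\<Sum>j\<in>{K+1..N}. w j * 1) + (\<Sum>j\<in>{K+1..N'}. w' j * 1))"
  proof -
    have b1: "QI (\<lambda>q. \<Sum>j\<in>{1..K}. w j * \<bar>G j q - G' j q\<bar> + \<bar>w j - w' j\<bar> * G' j q)
       \<le> ennreal (\<Sum>j\<in>{1..K}. w j * (4 * r j) + \<bar>w j - w' j\<bar> * 1)"
    proof (rule QI_sum_le)
      fix j assume j: "j \<in> {1..K}"
      have d: "QI (\<lambda>q. \<bar>G j q - G' j q\<bar>) \<le> ennreal (4 * r j)"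
        unfolding G_def G'_def r_def using G_diff[OF th, of "z j" "z' j"] wK[OF j] by simp
      have i: "QI (G' j) \<le> ennreal 1" unfolding G'_def using G_int[OF th, of "z' j"] wK[OF j] by simp
      show "QI (\<lambda>q. w j * \<bar>G j q - G' j q\<bar> + \<bar>w j - w' j\<bar> * G' j q) \<le> ennreal (w j * (4 * r j) + \<bar>w j - w' j\<bar> * 1)"
        apply (rule QI_add_le)
        using wK[OF j] Gnn QI_cmult_le[OF _ _ _ d] QI_cmult_le[OF _ _ _ i] M0 rM[OF j] unfolding r_def
        by (auto simp: Gnn)
      show "(\<lambda>q. w j * \<bar>G j q - G' j q\<bar> + \<bar>w j - w' j\<bar> * G' j q) \<in> borel_measurable borel" by measurable
      show "w j * \<bar>G j q - G' j q\<bar> + \<bar>w j - w' j\<bar> * G' j q \<ge> 0" for q using wK[OF j] Gnn[of j q] by simp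
      show "w j * (4 * r j) + \<bar>w j - w' j\<bar> * 1 \<ge> 0" using wK[OF j] unfolding r_def by simp
    qed simp
    have b2: "QI (\<lambda>q. \<Sum>j\<in>{K+1..N}. w j * G j q) \<le> ennreal (\<Sum>j\<in>{K+1..N}. w j * 1)"
    proof (rule QI_sum_le)
      fix j assume j: "j \<in> {K+1..N}"
      hence j': "j \<in> {1..N}" by auto
      have i: "QI (G j) \<le> ennreal 1" unfolding G_def using G_int[OF th, of "z j"] wN[OF j'] by simp
      show "QI (\<lambda>q. w j * G j q) \<le> ennreal (w j * 1)"
        by (rule QI_cmult_le[OF _ _ _ i]) (use wN[OF j'] Gnn in auto)
      show "w j * 1 \<ge> 0" "w j * G j q \<ge> 0" for q using wN[OF j'] Gnn[of j q] by auto
    qed auto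
    have b3: "QI (\<lambda>q. \<Sum>j\<in>{K+1..N'}. w' j * G' j q) \<le> ennreal (\<Sum>j\<in>{K+1..N'}. w' j * 1)"
    proof (rule QI_sum_le)
      fix j assume j: "j \<in> {K+1..N'}"
      hence j': "j \<in> {1..N'}" by auto
      have i: "QI (G' j) \<le> ennreal 1" unfolding G'_def using G_int[OF th, of "z' j"] wN'[OF j'] by simp
      show "QI (\<lambda>q. w' j * G' j q) \<le> ennreal (w' j * 1)"
        by (rule QI_cmult_le[OF _ _ _ i]) (use wN'[OF j'] Gnn in auto)
      show "w' j * 1 \<ge> 0" "w' j * G' j q \<ge> 0" for q using wN'[OF j'] Gnn[of j q] by auto
    qed auto
    have nn1: "(\<Sum>j\<in>{1..K}. w j * \<bar>G j q - G' j q\<bar> + \<bar>w j - w' j\<bar> * G' j q) \<ge> 0" for q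
      using wK by (auto intro!: sum_nonneg simp: Gnn)
    have nn2: "(\<Sum>j\<in>{K+1..N}. w j * G j q) \<ge> 0" for q
      using wN KN by (auto intro!: sum_nonneg simp: Gnn)
    have nn3: "(\<Sum>j\<in>{K+1..N'}. w' j * G' j q) \<ge> 0" for q
      using wN' KN by (auto intro!: sum_nonneg simp: Gnn)
    have rr1: "(\<Sum>j\<in>{1..K}. w j * (4 * r j) + \<bar>w j - w' j\<bar> * 1) \<ge> 0"
      using wK unfolding r_def by (force intro!: sum_nonneg add_nonneg_nonneg mult_nonneg_nonneg divide_nonneg_pos)
    have rr2: "(\<Sum>j\<in>{K+1..N}. w j * 1) \<ge> 0" "(\<Sum>j\<in>{K+1..N'}. w' j * 1) \<ge> 0"
      using wN wN' KN by (auto intro!: sum_nonneg)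
    have b12: "QI (\<lambda>q. (\<Sum>j\<in>{1..K}. w j * \<bar>G j q - G' j q\<bar> + \<bar>w j - w' j\<bar> * G' j q)
      + (\<Sum>j\<in>{K+1..N}. w j * G j q)) \<le> ennreal ((\<Sum>j\<in>{1..K}. w j * (4 * r j) + \<bar>w j - w' j\<bar> * 1)
      + (\<Sum>j\<in>{K+1..N}. w j * 1))"
      by (rule QI_add_le[OF _ _ nn1 nn2 b1 b2 rr1 rr2(1)]) measurable
    show ?thesis unfolding B_def
      by (rule QI_add_le[OF _ _ _ nn3 b12 b3 _ rr2(2)]) (use nn1 nn2 rr1 rr2 in \<open>measurable, auto intro: add_nonneg_nonneg\<close>)
  qed
  also have "\<dots> \<le> ennreal (4 * M + (\<Sum>j\<in>{1..K}. \<bar>w j - w' j\<bar>)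
        + (\<Sum>j\<in>{K+1..N}. w j) + (\<Sum>j\<in>{K+1..N'}. w' j))"
  proof (rule ennreal_leI)
    have "(\<Sum>j\<in>{1..K}. w j * (4 * r j)) \<le> (\<Sum>j\<in>{1..K}. w j * (4 * M))"
      using wK rM by (intro sum_mono mult_left_mono) auto
    also have "\<dots> = 4 * M * (\<Sum>j\<in>{1..K}. w j)" by (simp add: sum_distrib_left sum_distrib_right algebra_simps)
    also have "\<dots> \<le> 4 * M * 1"
    proof -
      have "(\<Sum>j\<in>{K+1..N}. w j) \<ge> 0" using wN KN by (auto intro!: sum_nonneg)
      hence "(\<Sum>j\<in>{1..K}. w j) \<le> 1" using sum_split[OF KN(1), of w] assms(3) by linarith
      thus ?thesis using M0 by (intro mult_left_mono) auto
    qed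
    finally have "(\<Sum>j\<in>{1..K}. w j * (4 * r j)) \<le> 4 * M" by simp
    thus "(\<Sum>j\<in>{1..K}. w j * (4 * r j) + \<bar>w j - w' j\<bar> * 1)
      + (\<Sum>j\<in>{K+1..N}. w j * 1) + (\<Sum>j\<in>{K+1..N'}. w' j * 1) \<le> 4 * M + (\<Sum>j\<in>{1..K}. \<bar>w j - w' j\<bar>)
        + (\<Sum>j\<in>{K+1..N}. w j) + (\<Sum>j\<in>{K+1..N'}. w' j)"
      by (simp add: sum.distrib)
  qed
  finally show ?thesis unfolding M_def .
qed

end
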